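(* Let $(c_k)_{k\ge0}\subset(0,\infty)$, $(\mu_k)_{k\ge0}\subset(0,\infty)$, and let $\rho$ be a $(0,\infty)$-valued random variable with law $\mathcal L_\rho$, $\mathbb E[\rho]=1$, not almost surely equal to $1$. Define $d_{k+1}=\mathbb E_{\mathcal L_\rho}\big[\frac{c_k(\mu_k\rho+d_k)}{c_k+(\mu_k\rho+d_k)}\big]$, $d^0_{k+1}=\frac{c_kd^0_k}{c_k+d^0_k}$ (the recursion with $\mathcal L_\rho=\delta_0$) and $d^1_{k+1}=\frac{c_k(\mu_k+d^1_k)}{c_k+(\mu_k+d^1_k)}$ (the recursion with $\mathcal L_\rho=\delta_1$). If $d^0_0=d_0=d^1_0\ge0$, then $d^0_k<d_k<d^1_k$ for all $k\in\mathbb N$. *)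

theory Defs
  imports "HOL-Probability.Probability"
begin

primrec dseq :: "'a measure \<Rightarrow> ('a \<Rightarrow> real) \<Rightarrow> (nat \<Rightarrow> real) \<Rightarrow> (nat \<Rightarrow> real) \<Rightarrow> real \<Rightarrow> nat \<Rightarrow> real" where
  "dseq M \<rho> c \<mu> d0 0 = d0"
| "dseq M \<rho> c \<mu> d0 (Suc k) =
     (\<integral>\<omega>. c k * (\<mu> k * \<rho> \<omega> + dseq M \<rho> c \<mu> d0 k) / (c k + (\<mu> k * \<rho> \<omega> + dseq M \<rho> c \<mu> d0 k)) \<partial>M)"

primrec dseq0 :: "(nat \<Rightarrow> real) \<Rightarrow> real \<Rightarrow> nat \<Rightarrow> real" where
  "dseq0 c d0 0 = d0"
| "dseq0 c d0 (Suc k) = c k * dseq0 c d0 k / (c k + dseq0 c d0 k)"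

primrec dseq1 :: "(nat \<Rightarrow> real) \<Rightarrow> (nat \<Rightarrow> real) \<Rightarrow> real \<Rightarrow> nat \<Rightarrow> real" where
  "dseq1 c \<mu> d0 0 = d0"
| "dseq1 c \<mu> d0 (Suc k) = c k * (\<mu> k + dseq1 c \<mu> d0 k) / (c k + (\<mu> k + dseq1 c \<mu> d0 k))"

end

theory Submission
  imports Defs
begin

lemma fmono:
  fixes c a b :: real
  assumes "c > 0" "0 \<le> a" "a \<le> b"
  shows "c*a/(c+a) \<le> c*b/(c+b)"
proof -
  have "c*c*a \<le> c*c*b" using assms by (intro mult_left_mono) auto
  hence "c*a*(c+b) \<le> c*b*(c+a)" by (simp add: algebra_simps)
  thus ?thesis using assms by (simp add: divide_simps)
qed

lemma fstrict:
  fixes c a b :: real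
  assumes "c > 0" "0 \<le> a" "a < b"
  shows "c*a/(c+a) < c*b/(c+b)"
proof -
  have "c*c*a < c*c*b" using assms by (intro mult_strict_left_mono) auto
  hence "c*a*(c+b) < c*b*(c+a)" by (simp add: algebra_simps)
  thus ?thesis using assms by (simp add: divide_simps)
qed

lemma fdecomp: fixes c x :: real assumes "c + x > 0" shows "c*x/(c+x) = c - c^2/(c+x)"
  using assms by (simp add: field_simps power2_eq_square)

lemma gid0:
  fixes c X A :: real
  assumes "X > 0" "A > 0"
  shows "(c - c^2/A) + c^2/A^2 * (X - A) - (c - c^2/X) = c^2*(X-A)^2/(X*A^2)"
  using assms by (simp add: field_simps power2_eq_square)

lemma gid:
  fixes c m b r :: real
  assumes "c > 0" "m > 0" "b \<ge> 0" "r > 0"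
  shows "c*(m+b)/(c+(m+b)) + c^2*m/(c+(m+b))^2 * (r - 1) - c*(m*r+b)/(c+(m*r+b))
       = c^2*m^2*(r-1)^2/((c+(m*r+b))*(c+(m+b))^2)"
proof -
  have X: "c+(m*r+b) > 0" "c+(m+b) > 0" using assms by (auto intro: add_pos_nonneg)
  have e: "c^2*m/(c+(m+b))^2 * (r - 1) = c^2/(c+(m+b))^2 * ((c+(m*r+b)) - (c+(m+b)))"
    by (simp add: algebra_simps)
  have e2: "m^2*(r-1)^2 = ((c+(m*r+b)) - (c+(m+b)))^2" by (simp add: algebra_simps power2_eq_square)
  show ?thesis unfolding e fdecomp[OF X(1)] fdecomp[OF X(2)] gid0[OF X] mult.assoc e2 by simp
qed
lemma step:
  fixes M :: "'a measure" and \<rho> :: "'a \<Rightarrow> real" and c m a b e :: real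
  assumes P: "prob_space M"
    and meas: "\<rho> \<in> borel_measurable M"
    and pos0: "\<forall>\<omega>\<in>space M. \<rho> \<omega> > 0"
    and intr: "integrable M \<rho>"
    and E1: "(\<integral>\<omega>. \<rho> \<omega> \<partial>M) = 1"
    and nAE: "\<not> (AE \<omega> in M. \<rho> \<omega> = 1)"
    and c: "c > 0" and m: "m > 0" and ab: "0 \<le> a" "a \<le> b" "b \<le> e"
  shows "c*a/(c+a) < (\<integral>\<omega>. c*(m*\<rho> \<omega> + b)/(c+(m*\<rho> \<omega>+b)) \<partial>M)"
    and "(\<integral>\<omega>. c*(m*\<rho> \<omega> + b)/(c+(m*\<rho> \<omega>+b)) \<partial>M) < c*(m+e)/(c+(m+e))"
proof -
  interpret prob_space M by (rule P)
  have pos: "\<And>\<omega>. \<omega> \<in> space M \<Longrightarrow> \<rho> \<omega> > 0" using pos0 by auto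
  define h where "h = (\<lambda>\<omega>. c*(m*\<rho> \<omega> + b)/(c+(m*\<rho> \<omega>+b)))"
  have hm: "h \<in> borel_measurable M" unfolding h_def using meas by measurable
  have hb: "\<And>\<omega>. \<omega> \<in> space M \<Longrightarrow> norm (h \<omega>) \<le> c"
  proof -
    fix \<omega> assume "\<omega> \<in> space M"
    hence "m*\<rho> \<omega> + b > 0" using pos[of \<omega>] m ab by (simp add: add_pos_nonneg)
    thus "norm (h \<omega>) \<le> c" unfolding h_def using c by (simp add: divide_simps)
  qed
  have hi: "integrable M h"
    by (rule integrable_const_bound[where B=c]) (use hb hm in auto)
  have "c*a/(c+a) \<le> c*b/(c+b)" using fmono c ab by auto
  also have "c*b/(c+b) < integral\<^sup>L M h"
  proof -
    have "integral\<^sup>L M (\<lambda>_. c*b/(c+b)) < integral\<^sup>L M h"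
    proof (rule integral_less_AE_space)
      show "AE x in M. c * b / (c + b) < h x"
      proof (rule AE_I2)
        fix x assume x: "x \<in> space M"
        have "m*\<rho> x > 0" using pos[OF x] m by simp
        hence "c*b/(c+b) < c*(m*\<rho> x+b)/(c+(m*\<rho> x+b))"
          using fstrict[of c b "m*\<rho> x+b"] c ab by simp
        thus "c * b / (c + b) < h x" unfolding h_def by simp
      qed
    qed (use hi emeasure_space_1 in auto)
    thus ?thesis by (simp add: prob_space)
  qed
  finally show "c*a/(c+a) < (\<integral>\<omega>. c*(m*\<rho> \<omega> + b)/(c+(m*\<rho> \<omega>+b)) \<partial>M)"
    unfolding h_def .
  define K where "K = c*(m+b)/(c+(m+b))"
  define L where "L = c^2*m/(c+(m+b))^2"
  define g where "g = (\<lambda>\<omega>. K + L * (\<rho> \<omega> - 1) - h \<omega>)"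
  have gi: "integrable M g" unfolding g_def using hi intr by auto
  have geq: "\<And>\<omega>. \<omega> \<in> space M \<Longrightarrow> g \<omega> = c^2*m^2*(\<rho> \<omega>-1)^2/((c+(m*\<rho> \<omega>+b))*(c+(m+b))^2)"
    unfolding g_def K_def L_def h_def using gid c m ab pos by force
  have gnn: "\<And>\<omega>. \<omega> \<in> space M \<Longrightarrow> g \<omega> \<ge> 0"
  proof -
    fix \<omega> assume x: "\<omega> \<in> space M"
    have "c+(m*\<rho> \<omega>+b) > 0" using pos[OF x] m c ab by (simp add: add_pos_nonneg)
    thus "g \<omega> \<ge> 0" using geq[OF x] by simp
  qed
  have "integral\<^sup>L M g \<noteq> 0"
  proof
    assume "integral\<^sup>L M g = 0"
    hence "AE x in M. g x = 0" using integral_nonneg_eq_0_iff_AE[OF gi] gnn by (simp add: AE_I2)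
    hence "AE x in M. \<rho> x = 1"
    proof (rule AE_mp[OF _ AE_I2], intro impI)
      fix x assume x: "x \<in> space M" and "g x = 0"
      have "c+(m*\<rho> x+b) > 0" using pos[OF x] m c ab by (simp add: add_pos_nonneg)
      with \<open>g x = 0\<close> geq[OF x] c m ab have "(\<rho> x - 1)^2 = 0" by (auto simp: add_pos_nonneg)
      thus "\<rho> x = 1" by simp
    qed
    with nAE show False by simp
  qed
  moreover have "integral\<^sup>L M g \<ge> 0" using gnn by (simp add: integral_nonneg_AE AE_I2)
  moreover have "integral\<^sup>L M g = K - integral\<^sup>L M h"
  proof -
    have "integral\<^sup>L M g = integral\<^sup>L M (\<lambda>\<omega>. K + L * (\<rho> \<omega> - 1)) - integral\<^sup>L M h"
      unfolding g_def using hi intr by (subst Bochner_Integration.integral_diff) auto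
    also have "integral\<^sup>L M (\<lambda>\<omega>. K + L * (\<rho> \<omega> - 1)) = K + L * (integral\<^sup>L M \<rho> - 1)"
      using intr by (simp add: Bochner_Integration.integral_add Bochner_Integration.integral_diff prob_space)
    finally show ?thesis using E1 by simp
  qed
  ultimately have "integral\<^sup>L M h < K" by linarith
  also have "K \<le> c*(m+e)/(c+(m+e))" unfolding K_def using fmono[of c "m+b" "m+e"] c m ab by simp
  finally show "(\<integral>\<omega>. c*(m*\<rho> \<omega> + b)/(c+(m*\<rho> \<omega>+b)) \<partial>M) < c*(m+e)/(c+(m+e))"
    unfolding h_def .
qed

theorem theorem3p9:
  fixes M :: "'a measure" and \<rho> :: "'a \<Rightarrow> real"
    and c \<mu> :: "nat \<Rightarrow> real" and d0 :: real
  assumes "prob_space M"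
    and "\<rho> \<in> borel_measurable M"
    and "\<And>\<omega>. \<omega> \<in> space M \<Longrightarrow> \<rho> \<omega> > 0"
    and "integrable M \<rho>"
    and "(\<integral>\<omega>. \<rho> \<omega> \<partial>M) = 1"
    and "\<not> (AE \<omega> in M. \<rho> \<omega> = 1)"
    and "\<And>k. c k > 0"
    and "\<And>k. \<mu> k > 0"
    and "d0 \<ge> 0"
    and "k \<ge> 1"
  shows "dseq0 c d0 k < dseq M \<rho> c \<mu> d0 k \<and> dseq M \<rho> c \<mu> d0 k < dseq1 c \<mu> d0 k"
proof -
  have pos0: "\<forall>\<omega>\<in>space M. \<rho> \<omega> > 0" using assms(3) by auto
  note st = step[OF assms(1,2) pos0 assms(4,5,6)]
  have inv: "0 \<le> dseq0 c d0 j \<and> dseq0 c d0 j \<le> dseq M \<rho> c \<mu> d0 j \<and> dseq M \<rho> c \<mu> d0 j \<le> dseq1 c \<mu> d0 j" for j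
  proof (induction j)
    case 0 then show ?case using assms(9) by simp
  next
    case (Suc j)
    have p: "c j > 0" "\<mu> j > 0" using assms(7,8) by auto
    show ?case using Suc st(1)[OF p, of "dseq0 c d0 j" "dseq M \<rho> c \<mu> d0 j" "dseq1 c \<mu> d0 j"]
        st(2)[OF p, of "dseq0 c d0 j" "dseq M \<rho> c \<mu> d0 j" "dseq1 c \<mu> d0 j"] p
      by (auto intro: divide_nonneg_pos)
  qed
  obtain j where k: "k = Suc j" using assms(10) by (cases k) auto
  have p: "c j > 0" "\<mu> j > 0" using assms(7,8) by auto
  show ?thesis unfolding k using inv[of j] st(1)[OF p, of "dseq0 c d0 j" "dseq M \<rho> c \<mu> d0 j" "dseq1 c \<mu> d0 j"]
        st(2)[OF p, of "dseq0 c d0 j" "dseq M \<rho> c \<mu> d0 j" "dseq1 c \<mu> d0 j"] by auto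
qed

end
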